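(* Let $B(x)=\sum_{i=0}^d b_ix^i\in\mathbb{R}[x]$ have degree $d\ge1$ with $b_0\neq0$, and for $\ell\ge1$ let $B_1,\dots,B_\ell\in\mathbb{R}^{\ell+d}$ be the rows of the $\ell\times(\ell+d)$ matrix whose $k$-th row has entries $b_0,b_1,\dots,b_d$ in columns $k,k+1,\dots,k+d$ and zeros elsewhere. Then for every $M>M(B)^2$ there is a constant $K(M)$, independent of $\ell$, such that \[ \det\big(\langle B_i,B_j\rangle\big)_{1\le i,j\le\ell}\ \le\ K(M)\,M^{\ell}\qquad\text{for all }\ell\ge1. \]
   Context: $\langle\cdot,\cdot\rangle$ is the standard inner product. For $P(x)=c_d\prod_{i=1}^d(x-\alpha_i)\in\mathbb{C}[x]$ with $c_d\ne0$, the Mahler measure is $M(P)=|c_d|\prod_{i=1}^d\max\{1,|\alpha_i|\}$. *)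

theory Defs
  imports "Berlekamp_Zassenhaus.Mahler_Measure" "Jordan_Normal_Form.Determinant"
begin

text \<open>The k-th row (0-indexed, k < l) of the l x (l+d) banded matrix built from
  the coefficients b_0..b_d of B: entry in column j is b_(j-k) if k \<le> j \<le> k+d, else 0.\<close>
definition band_row :: "real poly \<Rightarrow> nat \<Rightarrow> nat \<Rightarrow> real vec" where
  "band_row B l k = vec (l + degree B)
     (\<lambda>j. if k \<le> j \<and> j \<le> k + degree B then coeff B (j - k) else 0)"

definition band_gram :: "real poly \<Rightarrow> nat \<Rightarrow> real mat" where
  "band_gram B l = mat l l (\<lambda>(i, j). band_row B l i \<bullet> band_row B l j)"

end

theory Submission
  imports Defs
begin


definition FF :: "nat \<Rightarrow> nat \<Rightarrow> (nat \<Rightarrow> nat) set" where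
  "FF n m = {f. (\<forall>i\<in>{0..<n}. f i \<in> {0..<m}) \<and> (\<forall>i. i \<notin> {0..<n} \<longrightarrow> f i = i)}"

lemma finite_FF: "finite (FF n m)"
  unfolding FF_def by (rule finite_bounded_functions, auto)

lemma det_AB_expand:
  fixes A B :: "'a::comm_ring_1 mat"
  assumes A: "A \<in> carrier_mat n m" and B: "B \<in> carrier_mat m n"
  shows "det (A * B) = (\<Sum>f\<in>FF n m. (\<Prod>i=0..<n. A $$ (i, f i)) * det (mat n n (\<lambda>(i,j). B $$ (f i, j))))"
proof -
  have "det (A * B) = sum (\<lambda>f. det (mat\<^sub>r n n (\<lambda> i. A $$ (i, f i) \<cdot>\<^sub>v row B (f i)))) (FF n m)"
    unfolding mat_mul_finsum_alt[OF A B] FF_def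
    by (rule det_linear_rows_sum, insert A B, auto)
  also have "\<dots> = (\<Sum>f\<in>FF n m. (\<Prod>i=0..<n. A $$ (i, f i)) * det (mat n n (\<lambda>(i,j). B $$ (f i, j))))"
  proof (rule sum.cong[OF refl])
    fix f assume f: "f \<in> FF n m"
    have "det (mat\<^sub>r n n (\<lambda> i. A $$ (i, f i) \<cdot>\<^sub>v row B (f i))) = 
      prod (\<lambda>i. A $$ (i, f i)) {0..<n} * det (mat\<^sub>r n n (\<lambda> i. row B (f i)))"
      by (rule det_rows_mul, insert B, auto)
    also have "mat\<^sub>r n n (\<lambda> i. row B (f i)) = mat n n (\<lambda>(i,j). B $$ (f i, j))"
      using f B unfolding FF_def by (intro eq_matI, auto)
    finally show "det (mat\<^sub>r n n (\<lambda> i. A $$ (i, f i) \<cdot>\<^sub>v row B (f i))) = 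
      (\<Prod>i=0..<n. A $$ (i, f i)) * det (mat n n (\<lambda>(i,j). B $$ (f i, j)))" .
  qed
  finally show ?thesis .
qed

lemma cauchy_binet_fact:
  fixes A B :: "'a::comm_ring_1 mat"
  assumes A: "A \<in> carrier_mat n m" and B: "B \<in> carrier_mat m n"
  shows "of_nat (fact n) * det (A * B) = (\<Sum>f\<in>FF n m. det (mat n n (\<lambda>(i,j). A $$ (i, f j))) * det (mat n n (\<lambda>(i,j). B $$ (f i, j))))"
proof -
  let ?P = "{p. p permutes {0..<n}}"
  let ?DB = "\<lambda>f. det (mat n n (\<lambda>(i,j). B $$ (f i, j)))"
  have dA: "det (mat n n (\<lambda>(i,j). A $$ (i, f j))) = (\<Sum>p\<in>?P. signof p * (\<Prod>i=0..<n. A $$ (i, f (p i))))" for f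
    by (subst det_def', auto intro!: sum.cong prod.cong)
  have "(\<Sum>f\<in>FF n m. det (mat n n (\<lambda>(i,j). A $$ (i, f j))) * ?DB f)
     = (\<Sum>f\<in>FF n m. \<Sum>p\<in>?P. signof p * (\<Prod>i=0..<n. A $$ (i, f (p i))) * ?DB f)"
    unfolding dA sum_distrib_right by simp
  also have "\<dots> = (\<Sum>p\<in>?P. \<Sum>f\<in>FF n m. signof p * (\<Prod>i=0..<n. A $$ (i, f (p i))) * ?DB f)"
    by (rule sum.swap)
  also have "\<dots> = (\<Sum>p\<in>?P. det (A * B))"
  proof (rule sum.cong[OF refl])
    fix p assume "p \<in> ?P"
    hence p: "p permutes {0..<n}" by auto
    let ?q = "Hilbert_Choice.inv p"
    have q: "?q permutes {0..<n}" using permutes_inv[OF p] .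
    have bij: "bij_betw (\<lambda>g. g \<circ> ?q) (FF n m) (FF n m)"
    proof (rule bij_betwI[where g = "\<lambda>g. g \<circ> p"])
      show "(\<lambda>g. g \<circ> ?q) \<in> FF n m \<rightarrow> FF n m" using q unfolding FF_def
        by (auto simp: permutes_in_image permutes_not_in)
      show "(\<lambda>g. g \<circ> p) \<in> FF n m \<rightarrow> FF n m" using p unfolding FF_def
        by (auto simp: permutes_in_image permutes_not_in)
      show "g \<circ> ?q \<circ> p = g" for g using permutes_inverses[OF p] by (auto simp: o_def)
      show "g \<circ> p \<circ> ?q = g" for g using permutes_inverses[OF p] by (auto simp: o_def)
    qed
    have "(\<Sum>f\<in>FF n m. signof p * (\<Prod>i=0..<n. A $$ (i, f (p i))) * ?DB f)
      = (\<Sum>g\<in>FF n m. signof p * (\<Prod>i=0..<n. A $$ (i, (g \<circ> ?q) (p i))) * ?DB (g \<circ> ?q))"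
      by (rule sum.reindex_bij_betw[OF bij, symmetric])
    also have "\<dots> = (\<Sum>g\<in>FF n m. (\<Prod>i=0..<n. A $$ (i, g i)) * ?DB g)"
    proof (rule sum.cong[OF refl])
      fix g assume g: "g \<in> FF n m"
      have "?DB (g \<circ> ?q) = det (mat n n (\<lambda>(i,j). (mat n n (\<lambda>(i,j). B $$ (g i, j))) $$ (?q i, j)))"
        using q by (intro arg_cong[of _ _ det] eq_matI, auto simp: permutes_in_image)
      also have "\<dots> = signof ?q * ?DB g"
        by (rule det_permute_rows[OF _ q], auto)
      also have "signof ?q = (signof p :: 'a)" by (rule signof_inv[OF _ p], auto)
      finally have 1: "?DB (g \<circ> ?q) = signof p * ?DB g" .
      have 2: "signof p * signof p = (1::'a)" by (simp add: sign_def)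
      show "signof p * (\<Prod>i=0..<n. A $$ (i, (g \<circ> ?q) (p i))) * ?DB (g \<circ> ?q) =
            (\<Prod>i=0..<n. A $$ (i, g i)) * ?DB g"
        unfolding 1 using permutes_inverses[OF p] 2
        by (simp add: o_def, metis (no_types, lifting) mult.assoc mult.left_commute mult_1)
    qed
    also have "\<dots> = det (A * B)" using det_AB_expand[OF A B] by simp
    finally show "(\<Sum>f\<in>FF n m. signof p * (\<Prod>i=0..<n. A $$ (i, f (p i))) * ?DB f) = det (A * B)" .
  qed
  also have "\<dots> = of_nat (fact n) * det (A * B)"
    using card_permutations[of "{0..<n}" n] by simp
  finally show ?thesis by simp
qed



lemma CS_sum:
  fixes x y :: "'i \<Rightarrow> real"
  shows "(\<Sum>i\<in>A. x i * y i)^2 \<le> (\<Sum>i\<in>A. (x i)^2) * (\<Sum>i\<in>A. (y i)^2)"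
proof -
  have "0 \<le> (\<Sum>i\<in>A. \<Sum>j\<in>A. (x i * y j - x j * y i)^2)"
    by (intro sum_nonneg, auto)
  also have "\<dots> = (\<Sum>i\<in>A. \<Sum>j\<in>A. (x i)^2 * (y j)^2 + (x j)^2 * (y i)^2 - 2 * ((x i * y i) * (x j * y j)))"
    by (intro sum.cong refl, simp add: power2_eq_square algebra_simps)
  also have "\<dots> = (\<Sum>i\<in>A. \<Sum>j\<in>A. (x i)^2 * (y j)^2) + (\<Sum>i\<in>A. \<Sum>j\<in>A. (x j)^2 * (y i)^2)
      - 2 * (\<Sum>i\<in>A. \<Sum>j\<in>A. (x i * y i) * (x j * y j))"
    by (simp add: sum_subtractf sum.distrib sum_distrib_left)
  also have "(\<Sum>i\<in>A. \<Sum>j\<in>A. (x i)^2 * (y j)^2) = (\<Sum>i\<in>A. (x i)^2) * (\<Sum>i\<in>A. (y i)^2)"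
    by (simp add: sum_product)
  also have "(\<Sum>i\<in>A. \<Sum>j\<in>A. (x j)^2 * (y i)^2) = (\<Sum>i\<in>A. (x i)^2) * (\<Sum>i\<in>A. (y i)^2)"
    by (subst sum.swap, simp add: sum_product)
  also have "(\<Sum>i\<in>A. \<Sum>j\<in>A. (x i * y i) * (x j * y j)) = (\<Sum>i\<in>A. x i * y i)^2"
    by (simp add: sum_product power2_eq_square)
  finally show ?thesis by simp
qed

interpretation cnj_hom: comm_ring_hom cnj
  by (unfold_locales, auto)

definition mH :: "complex mat \<Rightarrow> complex mat" where
  "mH X = mat (dim_col X) (dim_row X) (\<lambda>(i,j). cnj (X $$ (j,i)))"

definition csel :: "nat \<Rightarrow> complex mat \<Rightarrow> (nat \<Rightarrow> nat) \<Rightarrow> complex mat" where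
  "csel n X f = mat n n (\<lambda>(i,j). X $$ (i, f j))"

definition sG :: "nat \<Rightarrow> nat \<Rightarrow> complex mat \<Rightarrow> real" where
  "sG n m X = (\<Sum>f\<in>FF n m. (cmod (det (csel n X f)))^2)"

lemma gram_formula:
  assumes X: "X \<in> carrier_mat n m"
  shows "of_nat (fact n) * det (X * mH X) = complex_of_real (sG n m X)"
proof -
  have H: "mH X \<in> carrier_mat m n" using X unfolding mH_def by auto
  have "of_nat (fact n) * det (X * mH X) = (\<Sum>f\<in>FF n m. det (csel n X f) * cnj (det (csel n X f)))"
    unfolding cauchy_binet_fact[OF X H]
  proof (rule sum.cong[OF refl])
    fix f assume f: "f \<in> FF n m"
    have "mat n n (\<lambda>(i, j). mH X $$ (f i, j)) = transpose_mat (map_mat cnj (csel n X f))"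
      using f X unfolding mH_def csel_def FF_def by (intro eq_matI, auto)
    hence "det (mat n n (\<lambda>(i, j). mH X $$ (f i, j))) = cnj (det (csel n X f))"
      by (simp add: det_transpose[of _ n] csel_def)
    thus "det (mat n n (\<lambda>(i, j). X $$ (i, f j))) * det (mat n n (\<lambda>(i, j). mH X $$ (f i, j))) =
         det (csel n X f) * cnj (det (csel n X f))" by (simp add: csel_def)
  qed
  also have "\<dots> = complex_of_real (sG n m X)"
    unfolding sG_def of_real_sum complex_norm_square ..
  finally show ?thesis .
qed

lemma sG_nonneg: "0 \<le> sG n m X" unfolding sG_def by (intro sum_nonneg, auto)

lemma gram_step:
  assumes X: "X \<in> carrier_mat n m" and Y: "Y \<in> carrier_mat m p"
  shows "(fact n)^2 * sG n p (X * Y) \<le> sG n m X *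
     (\<Sum>f\<in>FF n p. \<Sum>g\<in>FF n m. (cmod (det (mat n n (\<lambda>(i,j). Y $$ (g i, f j)))))^2)"
proof -
  let ?Y = "\<lambda>g f. cmod (det (mat n n (\<lambda>(i,j). Y $$ (g i, f j))))"
  let ?X = "\<lambda>g. cmod (det (csel n X g))"
  have "(fact n)^2 * (cmod (det (csel n (X * Y) f)))^2 \<le> sG n m X * (\<Sum>g\<in>FF n m. (?Y g f)^2)"
    if f: "f \<in> FF n p" for f
  proof -
    let ?Yf = "mat m n (\<lambda>(i,j). Y $$ (i, f j))"
    have Yf: "?Yf \<in> carrier_mat m n" by auto
    have "csel n (X * Y) f = X * ?Yf"
      using X Y f unfolding csel_def FF_def by (intro eq_matI, auto simp: scalar_prod_def)
    hence "of_nat (fact n) * det (csel n (X * Y) f) = 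
       (\<Sum>g\<in>FF n m. det (csel n X g) * det (mat n n (\<lambda>(i,j). ?Yf $$ (g i, j))))"
      using cauchy_binet_fact[OF X Yf] by (simp add: csel_def)
    also have "\<dots> = (\<Sum>g\<in>FF n m. det (csel n X g) * det (mat n n (\<lambda>(i,j). Y $$ (g i, f j))))"
      using X f unfolding FF_def
      by (intro sum.cong refl arg_cong2[where f = "(*)"] arg_cong[where f = det] eq_matI, auto)
    finally have eq: "of_nat (fact n) * det (csel n (X * Y) f) = \<dots>" .
    have "fact n * cmod (det (csel n (X * Y) f)) \<le> (\<Sum>g\<in>FF n m. ?X g * ?Y g f)"
    proof -
      have "fact n * cmod (det (csel n (X * Y) f)) = cmod (of_nat (fact n) * det (csel n (X * Y) f))"
        by (simp add: norm_mult)
      also have "\<dots> \<le> (\<Sum>g\<in>FF n m. cmod (det (csel n X g) * det (mat n n (\<lambda>(i,j). Y $$ (g i, f j)))))"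
        unfolding eq by (rule norm_sum)
      finally show ?thesis by (simp add: norm_mult)
    qed
    hence "(fact n * cmod (det (csel n (X * Y) f)))^2 \<le> (\<Sum>g\<in>FF n m. ?X g * ?Y g f)^2"
      by (intro power_mono, auto)
    also have "\<dots> \<le> (\<Sum>g\<in>FF n m. (?X g)^2) * (\<Sum>g\<in>FF n m. (?Y g f)^2)" by (rule CS_sum)
    finally show ?thesis unfolding sG_def by (simp add: power_mult_distrib)
  qed
  hence "(\<Sum>f\<in>FF n p. (fact n)^2 * (cmod (det (csel n (X * Y) f)))^2) \<le> (\<Sum>f\<in>FF n p. sG n m X * (\<Sum>g\<in>FF n m. (?Y g f)^2))"
    by (intro sum_mono)
  thus ?thesis unfolding sG_def[of n p] by (simp add: sum_distrib_left)
qed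



lemma perm_lt: "s permutes {0..<(n::nat)} \<Longrightarrow> i < n \<Longrightarrow> s i < n"
proof -
  assume s: "s permutes {0..<n}" and i: "i < n"
  have "s i \<in> {0..<n}" using permutes_in_image[OF s, of i] i by simp
  thus ?thesis by simp
qed

lemma match_unique_aux:
  fixes n :: nat
  assumes g: "inj_on g {0..<n}" and f: "inj_on f {0..<n}"
    and s: "s permutes {0..<n}" and t: "t permutes {0..<n}"
    and vt: "\<forall>i<n. f (t i) = g i \<or> f (t i) = Suc (g i)"
    and i: "i < n" "s i \<noteq> t i" and fs: "f (s i) = g i"
    and mini: "\<forall>j<n. s j \<noteq> t j \<longrightarrow> g i \<le> g j"
  shows False
proof -
  let ?j = "Hilbert_Choice.inv t (s i)"
  have si: "s i < n" using perm_lt[OF s i(1)] .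
  have tj: "t ?j = s i" using permutes_inverses(1)[OF t] by simp
  have j: "?j < n" using permutes_in_image[OF permutes_inv[OF t]] si by auto
  from vt j have "f (t ?j) = g ?j \<or> f (t ?j) = Suc (g ?j)" by auto
  hence "g i = g ?j \<or> g i = Suc (g ?j)" unfolding tj fs by auto
  thus False
  proof
    assume "g i = g ?j"
    with g i j have "i = ?j" by (auto simp: inj_on_def)
    with tj i show False by auto
  next
    assume gi: "g i = Suc (g ?j)"
    with mini j have "s ?j = t ?j" by force
    hence "s ?j = s i" using tj by simp
    hence "?j = i" using permutes_inj[OF s] by (auto simp: inj_def)
    with gi show False by simp
  qed
qed

lemma match_unique:
  fixes n :: nat
  assumes g: "inj_on g {0..<n}" and f: "inj_on f {0..<n}"
    and s: "s permutes {0..<n}" and t: "t permutes {0..<n}"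
    and vs: "\<forall>i<n. f (s i) = g i \<or> f (s i) = Suc (g i)"
    and vt: "\<forall>i<n. f (t i) = g i \<or> f (t i) = Suc (g i)"
  shows "s = t"
proof (rule ccontr)
  assume ne: "s \<noteq> t"
  have "\<exists>i<n. s i \<noteq> t i"
  proof (rule ccontr)
    assume "\<not> ?thesis"
    hence "s x = t x" for x using permutes_not_in[OF s] permutes_not_in[OF t]
      by (cases "x < n", auto)
    with ne show False by auto
  qed
  then obtain i0 where i0: "i0 < n \<and> s i0 \<noteq> t i0" by auto
  from ex_has_least_nat[of "\<lambda>i. i < n \<and> s i \<noteq> t i", OF i0, of g]
  obtain i where i: "i < n" "s i \<noteq> t i" and mini: "\<forall>j. j < n \<and> s j \<noteq> t j \<longrightarrow> g i \<le> g j"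
    by auto
  have sin: "s i < n" "t i < n" using perm_lt[OF s i(1)] perm_lt[OF t i(1)] by auto
  have "f (s i) \<noteq> f (t i)"
  proof
    assume "f (s i) = f (t i)"
    hence "s i = t i" using inj_onD[OF f, of "s i" "t i"] sin by simp
    with i show False by auto
  qed
  hence disj: "f (s i) = g i \<or> f (t i) = g i" using vs vt i by force
  show False
  proof (cases "f (s i) = g i")
    case True
    from match_unique_aux[OF g f s t vt i True] mini show False by auto
  next
    case False
    with disj have ft: "f (t i) = g i" by auto
    from match_unique_aux[OF g f t s vs i(1) _ ft] mini i(2) show False by auto
  qed
qed

lemma bidiag_minor:
  fixes Y :: "complex mat" and R :: real
  assumes R: "0 \<le> R"
    and Ybd: "\<And>r c. r < m \<Longrightarrow> c < p \<Longrightarrow> cmod (Y $$ (r,c)) \<le> R"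
    and Y0: "\<And>r c. r < m \<Longrightarrow> c < p \<Longrightarrow> c \<noteq> r \<Longrightarrow> c \<noteq> Suc r \<Longrightarrow> Y $$ (r,c) = 0"
    and g: "g \<in> FF n m" and f: "f \<in> FF n p"
  shows "cmod (det (mat n n (\<lambda>(i,j). Y $$ (g i, f j)))) \<le> 
    (if inj_on g {0..<n} \<and> inj_on f {0..<n} then R^n else 0)"
proof -
  let ?M = "mat n n (\<lambda>(i,j). Y $$ (g i, f j))"
  have M: "?M \<in> carrier_mat n n" by auto
  show ?thesis
  proof (cases "inj_on g {0..<n} \<and> inj_on f {0..<n}")
    case False
    have "det ?M = 0"
    proof (cases "inj_on g {0..<n}")
      case False
      then obtain i j where ij: "i \<noteq> j" "i < n" "j < n" "g i = g j" unfolding inj_on_def by auto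
      show ?thesis by (rule det_identical_rows[OF M ij(1-3)], insert ij, auto)
    next
      case True
      with False have "\<not> inj_on f {0..<n}" by auto
      then obtain i j where ij: "i \<noteq> j" "i < n" "j < n" "f i = f j" unfolding inj_on_def by auto
      show ?thesis by (rule det_identical_columns[OF M ij(1-3)], insert ij, auto)
    qed
    with False R show ?thesis by simp
  next
    case True
    hence gi: "inj_on g {0..<n}" and fi: "inj_on f {0..<n}" by auto
    let ?P = "{p. p permutes {0..<n}}"
    let ?V = "{s \<in> ?P. \<forall>i<n. f (s i) = g i \<or> f (s i) = Suc (g i)}"
    let ?t = "\<lambda>s. signof s * (\<Prod>i=0..<n. ?M $$ (i, s i))"
    have finP: "finite ?P" by (rule finite_permutations, auto)
    have "det ?M = sum ?t ?P" by (rule det_def'[OF M])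
    also have "\<dots> = sum ?t ?V"
    proof (rule sum.mono_neutral_right[OF finP], force, rule ballI)
      fix s assume sV: "s \<in> ?P - ?V"
      hence s: "s permutes {0..<n}" and nv: "\<not> (\<forall>i<n. f (s i) = g i \<or> f (s i) = Suc (g i))" by auto
      then obtain i where i: "i < n" "f (s i) \<noteq> g i" "f (s i) \<noteq> Suc (g i)" by auto
      have si: "s i < n" using perm_lt[OF s i(1)] .
      have "?M $$ (i, s i) = 0" using i si g f Y0[of "g i" "f (s i)"] unfolding FF_def by auto
      hence "(\<Prod>i=0..<n. ?M $$ (i, s i)) = 0" using i by (intro prod_zero, auto)
      thus "?t s = 0" by simp
    qed
    finally have detM: "det ?M = sum ?t ?V" .
    have finV: "finite ?V" using finP by auto
    have "card ?V \<le> Suc 0" unfolding card_le_Suc0_iff_eq[OF finV]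
      using match_unique[OF gi fi] by blast
    hence cardV: "card ?V \<le> 1" by simp
    have "cmod (det ?M) \<le> (\<Sum>s\<in>?V. cmod (?t s))" unfolding detM by (rule norm_sum)
    also have "\<dots> \<le> (\<Sum>s\<in>?V. R^n)"
    proof (rule sum_mono)
      fix s assume s: "s \<in> ?V"
      have "cmod (?t s) = (\<Prod>i=0..<n. cmod (?M $$ (i, s i)))"
        by (simp add: norm_mult prod_norm sign_def)
      also have "\<dots> \<le> (\<Prod>i=0..<n. R)"
      proof (intro prod_mono)
        fix i assume i: "i \<in> {0..<n}"
        have si: "s i < n" using perm_lt[of s n i] s i by auto
        show "0 \<le> cmod (?M $$ (i, s i)) \<and> cmod (?M $$ (i, s i)) \<le> R"
          using i si g f Ybd[of "g i" "f (s i)"] unfolding FF_def by auto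
      qed
      finally show "cmod (?t s) \<le> R^n" by simp
    qed
    also have "\<dots> = card ?V * R^n" by simp
    also have "\<dots> \<le> 1 * R^n" by (rule mult_right_mono, insert cardV R, auto)
    finally show ?thesis using True by simp
  qed
qed



definition cT :: "nat \<Rightarrow> complex poly \<Rightarrow> complex mat" where
  "cT n P = mat n (n + degree P) (\<lambda>(i,j). if i \<le> j then coeff P (j - i) else 0)"

lemma cT_carrier: "cT n P \<in> carrier_mat n (n + degree P)" unfolding cT_def by auto

lemma cT_mult:
  assumes P: "P \<noteq> 0" and Q: "Q \<noteq> 0"
  shows "cT n (P * Q) = cT n P * cT (n + degree P) Q"
proof -
  have dPQ: "degree (P * Q) = degree P + degree Q" using degree_mult_eq[OF P Q] .
  show ?thesis
  proof (rule eq_matI)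
    show "dim_row (cT n (P * Q)) = dim_row (cT n P * cT (n + degree P) Q)" by (simp add: cT_def)
    show "dim_col (cT n (P * Q)) = dim_col (cT n P * cT (n + degree P) Q)" by (simp add: cT_def dPQ)
    fix i j assume i: "i < dim_row (cT n P * cT (n + degree P) Q)"
      and j: "j < dim_col (cT n P * cT (n + degree P) Q)"
    hence i: "i < n" and j: "j < n + degree P + degree Q" by (auto simp: cT_def)
    let ?N = "n + degree P"
    let ?h = "\<lambda>k. (if i \<le> k then coeff P (k - i) else 0) * (if k \<le> j then coeff Q (j - k) else 0)"
    have rhs: "(cT n P * cT (n + degree P) Q) $$ (i,j) = (\<Sum>k\<in>{0..<?N}. ?h k)"
      using i j by (simp add: cT_def scalar_prod_def)
    have "(\<Sum>k\<in>{0..<?N}. ?h k) = (\<Sum>k\<in>{0..<?N + j + 1}. ?h k)"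
    proof (rule sum.mono_neutral_left, simp, force, rule ballI)
      fix k assume k: "k \<in> {0..<?N + j + 1} - {0..<?N}"
      hence "k - i > degree P" using i by auto
      hence "coeff P (k - i) = 0" by (simp add: coeff_eq_0)
      thus "?h k = 0" by simp
    qed
    also have "\<dots> = (\<Sum>k\<in>{i..j}. coeff P (k - i) * coeff Q (j - k))"
      by (rule sum.mono_neutral_cong_right, auto)
    finally have h: "(\<Sum>k\<in>{0..<?N}. ?h k) = (\<Sum>k\<in>{i..j}. coeff P (k - i) * coeff Q (j - k))" .
    show "cT n (P * Q) $$ (i, j) = (cT n P * cT (n + degree P) Q) $$ (i, j)"
    proof (cases "i \<le> j")
      case False
      hence "{i..j} = {}" by auto
      with h rhs i j False show ?thesis by (simp add: cT_def dPQ)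
    next
      case True
      have "(\<Sum>k\<in>{i..j}. coeff P (k - i) * coeff Q (j - k)) = 
            (\<Sum>a\<in>{0..j-i}. coeff P a * coeff Q (j - i - a))"
      proof -
        have "{i..j} = {0 + i..(j - i) + i}" using True by auto
        hence "(\<Sum>k\<in>{i..j}. coeff P (k - i) * coeff Q (j - k)) = 
          (\<Sum>a\<in>{0..j-i}. coeff P (a + i - i) * coeff Q (j - (a + i)))"
          by (simp only: sum.shift_bounds_cl_nat_ivl)
        also have "\<dots> = (\<Sum>a\<in>{0..j-i}. coeff P a * coeff Q (j - i - a))"
        proof (intro sum.cong refl)
          fix a
          have "j - (a + i) = j - i - a" by simp
          thus "coeff P (a + i - i) * coeff Q (j - (a + i)) = coeff P a * coeff Q (j - i - a)" by simp
        qed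
        finally show ?thesis .
      qed
      also have "\<dots> = coeff (P * Q) (j - i)" by (simp add: coeff_mult atLeast0AtMost)
      finally show ?thesis using h rhs i j True by (simp add: cT_def dPQ)
    qed
  qed
qed

lemma prod_choose: "(\<Prod>i\<in>{0..<n}. (p::nat) - i) = fact n * (p choose n)"
proof (induction n arbitrary: p)
  case 0 thus ?case by simp
next
  case (Suc n)
  have "(\<Prod>i\<in>{0..<Suc n}. p - i) = (p - 0) * (\<Prod>i\<in>{0..<n}. p - Suc i)"
    using prod.atLeast0_lessThan_Suc_shift[of "\<lambda>i. p - i" n] by simp
  also have "(\<Prod>i\<in>{0..<n}. p - Suc i) = (\<Prod>i\<in>{0..<n}. (p - 1) - i)"
    by (intro prod.cong refl, simp)
  finally have "(\<Prod>i\<in>{0..<Suc n}. p - i) = p * (\<Prod>i\<in>{0..<n}. (p - 1) - i)" by simp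
  also have "\<dots> = p * (fact n * ((p - 1) choose n))" by (subst Suc.IH, rule refl)
  also have "\<dots> = fact (Suc n) * (p choose Suc n)"
  proof (cases p)
    case 0 thus ?thesis by simp
  next
    case (Suc q)
    have "Suc q * (q choose n) = (Suc q choose Suc n) * Suc n" by (rule Suc_times_binomial_eq)
    thus ?thesis using Suc by (simp add: algebra_simps)
  qed
  finally show ?case .
qed

lemma card_inj_FF: "card {f\<in>FF n p. inj_on f {0..<n}} = fact n * (p choose n)"
proof -
  have "bij_betw (\<lambda>f. restrict f {0..<n}) {f\<in>FF n p. inj_on f {0..<n}} {f \<in> {0..<n} \<rightarrow>\<^sub>E {0..<p}. inj_on f {0..<n}}"
  proof (rule bij_betwI[where g = "\<lambda>f i. if i < n then f i else i"])
    show "(\<lambda>f. restrict f {0..<n}) \<in> {f\<in>FF n p. inj_on f {0..<n}} \<rightarrow> {f \<in> {0..<n} \<rightarrow>\<^sub>E {0..<p}. inj_on f {0..<n}}"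
      unfolding FF_def by (auto simp: inj_on_def)
    show "(\<lambda>f i. if i < n then f i else i) \<in> {f \<in> {0..<n} \<rightarrow>\<^sub>E {0..<p}. inj_on f {0..<n}} \<rightarrow> {f\<in>FF n p. inj_on f {0..<n}}"
      unfolding FF_def by (auto simp: inj_on_def)
    show "(\<lambda>i. if i < n then restrict f {0..<n} i else i) = f" if "f \<in> {f\<in>FF n p. inj_on f {0..<n}}" for f
      using that unfolding FF_def by auto
    show "restrict (\<lambda>i. if i < n then f i else i) {0..<n} = f" if "f \<in> {f \<in> {0..<n} \<rightarrow>\<^sub>E {0..<p}. inj_on f {0..<n}}" for f
      using that by (auto simp: PiE_def extensional_def)
  qed
  hence "card {f\<in>FF n p. inj_on f {0..<n}} = card {f \<in> {0..<n} \<rightarrow>\<^sub>E {0..<p}. inj_on f {0..<n}}"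
    by (rule bij_betw_same_card)
  also have "\<dots> = (\<Prod>i\<in>{0..<n}. p - i)"
    by (subst card_inj_on_subset_funcset, auto)
  finally show ?thesis unfolding prod_choose .
qed



lemma sum_inj_count:
  "(\<Sum>f\<in>FF n p. \<Sum>g\<in>FF n m. (if inj_on g {0..<n} \<and> inj_on f {0..<n} then (c::real) else 0))
   = c * card {f\<in>FF n p. inj_on f {0..<n}} * card {g\<in>FF n m. inj_on g {0..<n}}"
proof -
  have "(\<Sum>f\<in>FF n p. \<Sum>g\<in>FF n m. (if inj_on g {0..<n} \<and> inj_on f {0..<n} then c else 0))
     = (\<Sum>f\<in>FF n p. (if inj_on f {0..<n} then 1 else 0) * (\<Sum>g\<in>FF n m. (if inj_on g {0..<n} then c else 0)))"
    by (intro sum.cong refl, auto simp: sum_distrib_left)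
  also have "\<dots> = (\<Sum>f\<in>FF n p. (if inj_on f {0..<n} then 1 else 0)) * (\<Sum>g\<in>FF n m. (if inj_on g {0..<n} then c else 0))"
    by (simp add: sum_distrib_right)
  also have "(\<Sum>f\<in>FF n p. (if inj_on f {0..<n} then 1 else 0)) = (\<Sum>f\<in>{f\<in>FF n p. inj_on f {0..<n}}. (1::real))"
    by (rule sum.inter_filter[OF finite_FF, symmetric])
  also have "(\<Sum>g\<in>FF n m. (if inj_on g {0..<n} then c else 0)) = (\<Sum>g\<in>{g\<in>FF n m. inj_on g {0..<n}}. c)"
    by (rule sum.inter_filter[OF finite_FF, symmetric])
  finally show ?thesis by simp
qed

lemma lin_step:
  assumes P: "P \<noteq> 0" and k: "k = degree P"
  shows "sG n (n + k + 1) (cT n (P * [:-a, 1:])) \<le> sG n (n + k) (cT n P) * 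
     (max 1 (cmod a))^(2*n) * ((n + k) choose n) * ((n + k + 1) choose n)"
proof -
  let ?L = "[:-a, 1:] :: complex poly"
  let ?R = "max 1 (cmod a)"
  let ?X = "cT n P" and ?Y = "cT (n + k) ?L"
  have L: "?L \<noteq> 0" by simp
  have X: "?X \<in> carrier_mat n (n + k)" using cT_carrier[of n P] k by simp
  have Y: "?Y \<in> carrier_mat (n + k) (n + k + 1)" using cT_carrier[of "n + k" ?L] by simp
  have XY: "cT n (P * ?L) = ?X * ?Y" using cT_mult[OF P L] k by simp
  have bound: "cmod (det (mat n n (\<lambda>(i,j). ?Y $$ (g i, f j)))) \<le> 
    (if inj_on g {0..<n} \<and> inj_on f {0..<n} then ?R^n else 0)"
    if g: "g \<in> FF n (n + k)" and f: "f \<in> FF n (n + k + 1)" for f g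
  proof (rule bidiag_minor[OF _ _ _ g f])
    show "0 \<le> ?R" by simp
    fix r c assume r: "r < n + k" and c: "c < n + k + 1"
    have Yrc: "?Y $$ (r,c) = (if r \<le> c then coeff ?L (c - r) else 0)" using r c by (simp add: cT_def)
    show "cmod (?Y $$ (r,c)) \<le> ?R"
    proof (cases "r \<le> c")
      case True
      consider "c - r = 0" | "c - r = 1" | "c - r \<ge> 2" by linarith
      thus ?thesis
      proof cases
        case 1 thus ?thesis using Yrc True by simp
      next
        case 2 thus ?thesis using Yrc True by simp
      next
        case 3
        hence "coeff ?L (c - r) = 0" by (simp add: coeff_eq_0)
        thus ?thesis using Yrc True by simp
      qed
    qed (insert Yrc, simp)
    assume "c \<noteq> r" "c \<noteq> Suc r"
    hence "r \<le> c \<Longrightarrow> c - r \<ge> 2" by auto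
    hence "r \<le> c \<Longrightarrow> coeff ?L (c - r) = 0" by (simp add: coeff_eq_0)
    thus "?Y $$ (r,c) = 0" using Yrc by auto
  qed
  let ?S = "(\<Sum>f\<in>FF n (n + k + 1). \<Sum>g\<in>FF n (n + k). (cmod (det (mat n n (\<lambda>(i,j). ?Y $$ (g i, f j)))))^2)"
  have "?S \<le> (\<Sum>f\<in>FF n (n + k + 1). \<Sum>g\<in>FF n (n + k). (if inj_on g {0..<n} \<and> inj_on f {0..<n} then (?R^n)^2 else 0))"
  proof (intro sum_mono)
    fix f g assume f: "f \<in> FF n (n + k + 1)" and g: "g \<in> FF n (n + k)"
    have "(cmod (det (mat n n (\<lambda>(i,j). ?Y $$ (g i, f j)))))^2 \<le> (if inj_on g {0..<n} \<and> inj_on f {0..<n} then ?R^n else 0)^2"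
      by (rule power_mono[OF bound[OF g f]], simp)
    thus "(cmod (det (mat n n (\<lambda>(i,j). ?Y $$ (g i, f j)))))^2 \<le> (if inj_on g {0..<n} \<and> inj_on f {0..<n} then (?R^n)^2 else 0)"
      by (auto split: if_splits)
  qed
  also have "\<dots> = (?R^n)^2 * (fact n * ((n + k + 1) choose n)) * (fact n * ((n + k) choose n))"
    unfolding sum_inj_count card_inj_FF by simp
  finally have S: "?S \<le> (?R^n)^2 * (fact n * ((n + k + 1) choose n)) * (fact n * ((n + k) choose n))" .
  have "(fact n)^2 * sG n (n + k + 1) (?X * ?Y) \<le> sG n (n + k) ?X * ?S"
    by (rule gram_step[OF X Y])
  also have "\<dots> \<le> sG n (n + k) ?X * ((?R^n)^2 * (fact n * ((n + k + 1) choose n)) * (fact n * ((n + k) choose n)))"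
    by (rule mult_left_mono[OF S sG_nonneg])
  also have "\<dots> = (fact n)^2 * (sG n (n + k) ?X * ?R^(2*n) * ((n + k) choose n) * ((n + k + 1) choose n))"
    by (simp add: power_mult power2_eq_square algebra_simps)
  finally have "(fact n)^2 * sG n (n + k + 1) (?X * ?Y) \<le> (fact n)^2 * (sG n (n + k) ?X * ?R^(2*n) * ((n + k) choose n) * ((n + k + 1) choose n))" .
  hence "sG n (n + k + 1) (?X * ?Y) \<le> sG n (n + k) ?X * ?R^(2*n) * ((n + k) choose n) * ((n + k + 1) choose n)"
    by (rule mult_left_le_imp_le, simp)
  thus ?thesis unfolding XY .
qed

lemma base_const:
  "sG n n (cT n [:c:]) = fact n * cmod c ^ (2 * n)"
proof -
  have X: "cT n [:c:] \<in> carrier_mat n n" using cT_carrier[of n "[:c:]"] by simp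
  have X1: "cT n [:c:] = mat n n (\<lambda>(i,j). if i = j then c else 0)"
    by (rule eq_matI, auto simp: cT_def coeff_pCons split: nat.splits)
  have eq: "cT n [:c:] * mH (cT n [:c:]) = (c * cnj c) \<cdot>\<^sub>m 1\<^sub>m n"
  proof (rule eq_matI)
    fix i j assume i: "i < dim_row ((c * cnj c) \<cdot>\<^sub>m 1\<^sub>m n)" and j: "j < dim_col ((c * cnj c) \<cdot>\<^sub>m 1\<^sub>m n)"
    hence i: "i < n" and j: "j < n" by auto
    have "(cT n [:c:] * mH (cT n [:c:])) $$ (i,j) = (\<Sum>k\<in>{0..<n}. (if i = k then c else 0) * cnj (if j = k then c else 0))"
      unfolding X1 using i j by (simp add: mH_def scalar_prod_def)
    also have "\<dots> = (\<Sum>k\<in>{0..<n}. if k = i then (if j = i then c * cnj c else 0) else 0)"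
      by (intro sum.cong, auto)
    also have "\<dots> = (if j = i then c * cnj c else 0)" using i by simp
    finally show "(cT n [:c:] * mH (cT n [:c:])) $$ (i,j) = ((c * cnj c) \<cdot>\<^sub>m 1\<^sub>m n) $$ (i,j)"
      using i j by auto
  qed (auto simp: X1 mH_def)
  have "complex_of_real (sG n n (cT n [:c:])) = of_nat (fact n) * (c * cnj c)^n"
    unfolding gram_formula[OF X, symmetric] eq by simp
  also have "\<dots> = complex_of_real (fact n * cmod c ^ (2 * n))"
    unfolding complex_norm_square[symmetric] by (simp add: power_mult)
  finally show ?thesis by (simp only: of_real_eq_iff)
qed



lemma binom_bounds:
  fixes n k :: nat
  shows "((n + k) choose n) * ((n + k + 1) choose n) \<le> (n + k + 1)^(2 * k + 1)"
proof -
  have "(n + k) choose n = (n + k) choose k" using binomial_symmetric[of n "n + k"] by simp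
  also have "\<dots> \<le> (n + k)^k" by (rule binomial_le_pow, simp)
  also have "\<dots> \<le> (n + k + 1)^k" by (rule power_mono, auto)
  finally have 1: "(n + k) choose n \<le> (n + k + 1)^k" .
  have "(n + k + 1) choose n = (n + k + 1) choose (k + 1)" using binomial_symmetric[of n "n + k + 1"] by simp
  also have "\<dots> \<le> (n + k + 1)^(k + 1)" by (rule binomial_le_pow, simp)
  finally have 2: "(n + k + 1) choose n \<le> (n + k + 1)^(k + 1)" .
  have "((n + k) choose n) * ((n + k + 1) choose n) \<le> (n + k + 1)^k * (n + k + 1)^(k + 1)"
    by (rule mult_le_mono[OF 1 2])
  also have "\<dots> = (n + k + 1)^(k + (k + 1))" by (rule power_add[symmetric])
  also have "k + (k + 1) = 2 * k + 1" by simp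
  finally show ?thesis .
qed

lemma factor_step:
  fixes n k :: nat
  shows "(n + k + 1)^(4 * k^2) * (((n + k) choose n) * ((n + k + 1) choose n)) \<le> (n + Suc k + 1)^(4 * (Suc k)^2)"
proof -
  have "(n + k + 1)^(4 * k^2) * (((n + k) choose n) * ((n + k + 1) choose n)) \<le> (n + k + 1)^(4 * k^2) * (n + k + 1)^(2 * k + 1)"
    by (rule mult_le_mono2[OF binom_bounds])
  also have "\<dots> = (n + k + 1)^(4 * k^2 + (2 * k + 1))" by (rule power_add[symmetric])
  also have "\<dots> \<le> (n + k + 1)^(4 * (Suc k)^2)" by (rule power_increasing, auto simp: power2_eq_square)
  also have "\<dots> \<le> (n + Suc k + 1)^(4 * (Suc k)^2)" by (rule power_mono, auto)
  finally show ?thesis .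
qed

lemma chain:
  assumes c: "c \<noteq> 0"
  shows "sG n (n + length as) (cT n (smult c (\<Prod>a\<leftarrow>as. [:-a,1:]))) \<le> 
    fact n * real (n + length as + 1)^(4 * (length as)^2) * (cmod c * (\<Prod>a\<leftarrow>as. max 1 (cmod a)))^(2*n)"
proof (induction as)
  case Nil
  have "smult c (\<Prod>a\<leftarrow>[]. [:-a,1:]) = [:c:]" by simp
  thus ?case using base_const[of n c] by (simp add: power_mult)
next
  case (Cons a as)
  let ?P = "smult c (\<Prod>a\<leftarrow>as. [:-a,1:])"
  let ?k = "length as"
  let ?R = "max 1 (cmod a)"
  let ?Mo = "cmod c * (\<Prod>a\<leftarrow>as. max 1 (cmod a))"
  have dP: "degree ?P = ?k" using c degree_linear_factors[of "\<lambda>a. -a" as] by simp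
  have P0: "?P \<noteq> 0" using c by (auto simp: prod_list_zero_iff)
  have eqP: "smult c (\<Prod>a\<leftarrow>a # as. [:-a,1:]) = ?P * [:-a, 1:]" by (simp add: mult.commute)
  have "sG n (n + length (a # as)) (cT n (smult c (\<Prod>a\<leftarrow>a # as. [:-a,1:]))) 
     = sG n (n + ?k + 1) (cT n (?P * [:-a, 1:]))" unfolding eqP by simp
  also have "\<dots> \<le> sG n (n + ?k) (cT n ?P) * ?R^(2*n) * ((n + ?k) choose n) * ((n + ?k + 1) choose n)"
    by (rule lin_step[OF P0 dP[symmetric]])
  also have "\<dots> \<le> (fact n * real (n + ?k + 1)^(4 * ?k^2) * ?Mo^(2*n)) * ?R^(2*n) * ((n + ?k) choose n) * ((n + ?k + 1) choose n)"
    by (intro mult_right_mono Cons.IH, auto)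
  also have "\<dots> = fact n * real ((n + ?k + 1)^(4 * ?k^2) * (((n + ?k) choose n) * ((n + ?k + 1) choose n))) * (?Mo * ?R)^(2*n)"
    by (simp add: power_mult_distrib algebra_simps)
  also have "\<dots> \<le> fact n * real ((n + Suc ?k + 1)^(4 * (Suc ?k)^2)) * (?Mo * ?R)^(2*n)"
    by (intro mult_right_mono mult_left_mono, unfold of_nat_le_iff, rule factor_step, auto)
  also have "\<dots> = fact n * real (n + length (a # as) + 1)^(4 * (length (a # as))^2) * (cmod c * (\<Prod>a\<leftarrow>a # as. max 1 (cmod a)))^(2*n)"
    by (simp add: algebra_simps)
  finally show ?case .
qed

lemma asym:
  fixes q :: real
  assumes q0: "0 < q" and q1: "q < 1"
  shows "\<exists>K. \<forall>n. real (n + c)^e * q^n \<le> K"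
proof (cases "e = 0")
  case True
  thus ?thesis using q0 q1 by (intro exI[of _ 1], auto intro: power_le_one)
next
  case False
  hence e: "0 < e" by auto
  define s where "s = root e q"
  have s0: "0 < s" unfolding s_def using e q0 by simp
  have s1: "s < 1" unfolding s_def using real_root_lt_1_iff[OF e] q1 by simp
  have se: "s^e = q" unfolding s_def by (rule real_root_pow_pos[OF e q0])
  have "(\<lambda>n. of_nat n * s^n) \<longlonglongrightarrow> 0" by (rule powser_times_n_limit_0, insert s0 s1, simp)
  moreover have "(\<lambda>n. real c * s^n) \<longlonglongrightarrow> 0" 
    by (rule tendsto_mult_right_zero, rule LIMSEQ_power_zero, insert s0 s1, simp)
  ultimately have "(\<lambda>n. of_nat n * s^n + real c * s^n) \<longlonglongrightarrow> 0 + 0" by (rule tendsto_add)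
  hence "Bseq (\<lambda>n. of_nat n * s^n + real c * s^n)" by (intro convergent_imp_Bseq convergentI, simp)
  then obtain K where K: "\<forall>n. norm (of_nat n * s^n + real c * s^n) \<le> K" by (auto dest: BseqD)
  show ?thesis
  proof (intro exI allI)
    fix n
    have "real (n + c)^e * q^n = (real (n + c) * s^n)^e" 
      unfolding se[symmetric] by (simp add: power_mult_distrib power_mult[symmetric] mult.commute)
    also have "\<dots> \<le> K^e"
    proof (rule power_mono)
      have "real (n + c) * s^n = of_nat n * s^n + real c * s^n" by (simp add: algebra_simps)
      also have "\<dots> \<le> K" using K[rule_format, of n] by simp
      finally show "real (n + c) * s^n \<le> K" .
      show "0 \<le> real (n + c) * s^n" using s0 by simp
    qed
    finally show "real (n + c)^e * q^n \<le> K^e" .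
  qed
qed

lemma bridge:
  fixes B :: "real poly"
  shows "fact l * det (band_gram B l) = sG l (l + degree B) (cT l (map_poly complex_of_real B))"
proof -
  let ?Bc = "map_poly complex_of_real B"
  let ?X = "cT l ?Bc"
  have dB: "degree ?Bc = degree B" by (rule of_real_hom.degree_map_poly_hom)
  have X: "?X \<in> carrier_mat l (l + degree B)" using cT_carrier[of l ?Bc] dB by simp
  have entry: "?X $$ (i, t) = complex_of_real (if i \<le> t \<and> t \<le> i + degree B then coeff B (t - i) else 0)"
    if i: "i < l" and t: "t < l + degree B" for i t
  proof -
    have "?X $$ (i, t) = (if i \<le> t then coeff ?Bc (t - i) else 0)" using i t dB by (simp add: cT_def)
    also have "\<dots> = complex_of_real (if i \<le> t then coeff B (t - i) else 0)" by (simp add: coeff_map_poly)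
    also have "(if i \<le> t then coeff B (t - i) else 0) = (if i \<le> t \<and> t \<le> i + degree B then coeff B (t - i) else 0)"
      by (auto simp: coeff_eq_0)
    finally show ?thesis .
  qed
  have eq: "map_mat complex_of_real (band_gram B l) = ?X * mH ?X"
  proof (rule eq_matI)
    fix i j assume i: "i < dim_row (?X * mH ?X)" and j: "j < dim_col (?X * mH ?X)"
    hence i: "i < l" and j: "j < l" using X by (auto simp: mH_def)
    have "(?X * mH ?X) $$ (i, j) = (\<Sum>t\<in>{0..<l + degree B}. ?X $$ (i, t) * cnj (?X $$ (j, t)))"
      using i j X by (simp add: mH_def scalar_prod_def)
    also have "\<dots> = (\<Sum>t\<in>{0..<l + degree B}. complex_of_real ((if i \<le> t \<and> t \<le> i + degree B then coeff B (t - i) else 0) *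
        (if j \<le> t \<and> t \<le> j + degree B then coeff B (t - j) else 0)))"
      by (intro sum.cong refl, simp add: entry i j)
    also have "\<dots> = map_mat complex_of_real (band_gram B l) $$ (i, j)"
      using i j by (simp add: band_gram_def band_row_def scalar_prod_def)
    finally show "map_mat complex_of_real (band_gram B l) $$ (i, j) = (?X * mH ?X) $$ (i, j)" ..
  qed (insert X, auto simp: band_gram_def mH_def)
  have "complex_of_real (fact l * det (band_gram B l)) = of_nat (fact l) * det (map_mat complex_of_real (band_gram B l))"
    using of_real_hom.hom_det[of "band_gram B l"] by simp
  also have "\<dots> = complex_of_real (sG l (l + degree B) ?X)" unfolding eq by (rule gram_formula[OF X])
  finally show ?thesis by (simp only: of_real_eq_iff)
qed

theorem mainTheorem7:
  fixes B :: "real poly"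
  assumes "degree B \<ge> 1" and "coeff B 0 \<noteq> 0"
  shows "\<forall>M :: real. M > (mahler_measure_poly (map_poly complex_of_real B))\<^sup>2 \<longrightarrow>
           (\<exists>K :: real. \<forall>l :: nat. l \<ge> 1 \<longrightarrow> det (band_gram B l) \<le> K * M ^ l)"
proof (intro allI impI)
  fix M :: real
  let ?Bc = "map_poly complex_of_real B"
  let ?d = "degree B"
  let ?c = "lead_coeff ?Bc"
  let ?rs = "complex_roots_complex ?Bc"
  let ?mu = "mahler_measure_poly ?Bc"
  have power_mult_commute: "\<And>x::real. (x^a)^b = (x^b)^a" for a b by (simp flip: power_mult add: mult.commute)
  assume M: "M > ?mu^2"
  have dB: "degree ?Bc = ?d" by (rule of_real_hom.degree_map_poly_hom)
  have B0: "B \<noteq> 0" using assms(1) by auto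
  hence c0: "?c \<noteq> 0" by simp
  have Bc: "smult ?c (\<Prod>a\<leftarrow>?rs. [:-a,1:]) = ?Bc" by (rule complex_roots(1))
  have len: "length ?rs = ?d" using dB by simp
  have mu: "?mu = cmod ?c * (\<Prod>a\<leftarrow>?rs. max 1 (cmod a))" by (simp add: mahler_measure_poly_def)
  have mu_pos: "?mu > 0" unfolding mahler_measure_poly_via_monic
    using c0 mahler_measure_monic_ge_1[of ?Bc] by (intro mult_pos_pos, auto)
  have M0: "M > 0" using M mu_pos by (smt (verit) zero_less_power)
  define q where "q = ?mu^2 / M"
  have q0: "0 < q" unfolding q_def using mu_pos M0 by simp
  have q1: "q < 1" unfolding q_def using M M0 by simp
  obtain K where K: "\<forall>n. real (n + (?d + 1))^(4 * ?d^2) * q^n \<le> K" using asym[OF q0 q1] by blast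
  show "\<exists>K :: real. \<forall>l :: nat. l \<ge> 1 \<longrightarrow> det (band_gram B l) \<le> K * M ^ l"
  proof (intro exI allI impI)
    fix l :: nat
    have "fact l * det (band_gram B l) = sG l (l + ?d) (cT l ?Bc)" by (rule bridge)
    also have "\<dots> = sG l (l + length ?rs) (cT l (smult ?c (\<Prod>a\<leftarrow>?rs. [:-a,1:])))" unfolding Bc len ..
    also have "\<dots> \<le> fact l * real (l + length ?rs + 1)^(4 * (length ?rs)^2) * (cmod ?c * (\<Prod>a\<leftarrow>?rs. max 1 (cmod a)))^(2*l)"
      by (rule chain[OF c0])
    also have "\<dots> = fact l * (real (l + (?d + 1))^(4 * ?d^2) * (?mu^2)^l)"
      unfolding len mu[symmetric] by (simp add: power_mult algebra_simps flip: power_mult_commute)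
    also have "(?mu^2)^l = q^l * M^l" unfolding q_def using M0 by (simp add: power_divide)
    finally have "fact l * det (band_gram B l) \<le> fact l * (real (l + (?d + 1))^(4 * ?d^2) * q^l * M^l)"
      by (simp add: mult.assoc)
    hence "det (band_gram B l) \<le> real (l + (?d + 1))^(4 * ?d^2) * q^l * M^l"
      by (rule mult_left_le_imp_le, simp)
    also have "\<dots> \<le> K * M^l" by (rule mult_right_mono[OF K[rule_format]], insert M0, simp)
    finally show "det (band_gram B l) \<le> K * M^l" .
  qed
qed


end
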